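(* Let $\Gamma$ be a gain operator on $\ell^\infty_+(\mathcal I)$. The following are equivalent: (a) the set $\Psi(\Gamma)$ is cofinal; (b) for every $b\in\ell^\infty_+(\mathcal I)$, every trajectory of $\Sigma(\Gamma^{\oplus}_b)$ is norm-bounded, where $\Gamma^\oplus_b(s):=b\oplus\Gamma(s)$; (c) every trajectory of $\Sigma(\hat\Gamma)$ is norm-bounded, where $\hat\Gamma(s):=s\oplus\Gamma(s)$; (d) for every $s\ge0$ there exist $\hat s\ge0$ and $n\in\mathbb N$ with $s\le\Gamma^l(\hat s)$ for $0\le l<n$ and $\Gamma^n(\hat s)\le\hat s$.
   Context: Let $\mathcal I$ be a nonempty countable index set; $\ell^\infty_+(\mathcal I)$ is the cone of nonnegative real families $s=(s_i)_{i\in\mathcal I}$ with $\|s\|:=\sup_i|s_i|<\infty$, ordered componentwise; $\oplus$ is the componentwise maximum. $\mathcal K_\infty$: continuous strictly increasing unbounded $\gamma:\mathbb R_+\to\mathbb R_+$ with $\gamma(0)=0$. For $\mathcal J\subset\mathcal I$, $s_{|\mathcal J}$ agrees with $s$ on $\mathcal J$ and is $0$ elsewhere. Gain operator: for each $i$ a finite (possibly empty) $\mathcal I_i\subset\mathcal I\setminus\{i\}$; directed graph $\mathcal G$ with vertices $\mathcal I$ and edges $ji$, $j\in\mathcal I_i$; a pointwise equicontinuous family $\gamma_{ij}\in\mathcal K_\infty$ ($ji\in E(\mathcal G)$); functions $\mu_i:\ell^\infty_+(\mathcal I)\to[0,\infty]$ with (M1) some $\xi\in\mathcal K_\infty$ has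 $\mu_i(0)=0$, $\mu_i(s)\ge\xi(\|s\|)$; (M2) $\mu_i$ monotone; (M3) for each finite $\mathcal J$, $\mu_i$ restricted to vectors vanishing off $\mathcal J$ is finite-valued and continuous; (M4) for each norm-bounded $A$ and $\varepsilon>0$ there is $\delta>0$ with $\sup_i|\mu_i(s_{|\mathcal I_i})-\mu_i(s^0_{|\mathcal I_i})|\le\varepsilon$ whenever $s^0\in A$, $\|s-s^0\|\le\delta$. $\Gamma_i(s):=\mu_i([\gamma_{ij}(s_j)]_{j\in\mathcal I_i})$ (argument zero outside $\mathcal I_i$). For monotone $T$: $\Psi(T):=\{s:T(s)\le s\}$; $\Sigma(T)$ is the system $s^{n+1}=T(s^n)$, whose trajectories are $(T^n(s))_{n\ge0}$. A set $A$ is cofinal if every $s\in\ell^\infty_+(\mathcal I)$ has some $\hat s\in A$ with $s\le\hat s$. *)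

theory Defs
  imports "HOL-Analysis.Analysis" "HOL-Library.Extended_Nonnegative_Real"
begin

definition lpos :: "('i \<Rightarrow> real) set" where
  "lpos = {s. (\<forall>i. 0 \<le> s i) \<and> bdd_above (range (\<lambda>i. \<bar>s i\<bar>))}"

definition linf_norm :: "('i \<Rightarrow> real) \<Rightarrow> real" where
  "linf_norm s = (SUP i. \<bar>s i\<bar>)"

definition omax :: "('i \<Rightarrow> real) \<Rightarrow> ('i \<Rightarrow> real) \<Rightarrow> ('i \<Rightarrow> real)" where
  "omax s t = (\<lambda>i. max (s i) (t i))"

definition restr :: "('i \<Rightarrow> real) \<Rightarrow> 'i set \<Rightarrow> ('i \<Rightarrow> real)" where
  "restr s J = (\<lambda>i. if i \<in> J then s i else 0)"

definition Kinf :: "(real \<Rightarrow> real) \<Rightarrow> bool" where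
  "Kinf g \<longleftrightarrow> continuous_on {0..} g \<and> strict_mono_on {0..} g \<and> g 0 = 0 \<and>
     (\<forall>M. \<exists>r\<ge>0. g r > M)"

text \<open>The gain operator: \<Gamma>_i(s) = \<mu>_i([\<gamma>_ij(s_j)]_{j \<in> I_i}), argument zero outside I_i.
  The value is finite by (M3), so we take its real part.\<close>
definition Gam :: "('i \<Rightarrow> 'i set) \<Rightarrow> ('i \<Rightarrow> 'i \<Rightarrow> real \<Rightarrow> real) \<Rightarrow> ('i \<Rightarrow> ('i \<Rightarrow> real) \<Rightarrow> ennreal)
     \<Rightarrow> ('i \<Rightarrow> real) \<Rightarrow> ('i \<Rightarrow> real)" where
  "Gam II \<gamma> \<mu> s = (\<lambda>i. enn2real (\<mu> i (\<lambda>j. if j \<in> II i then \<gamma> i j (s j) else 0)))"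

definition gain_operator :: "('i \<Rightarrow> 'i set) \<Rightarrow> ('i \<Rightarrow> 'i \<Rightarrow> real \<Rightarrow> real) \<Rightarrow> ('i \<Rightarrow> ('i \<Rightarrow> real) \<Rightarrow> ennreal) \<Rightarrow> bool" where
  "gain_operator II \<gamma> \<mu> \<longleftrightarrow>
    \<comment> \<open>finite neighbour sets, no self loops\<close>
    (\<forall>i. finite (II i) \<and> i \<notin> II i) \<and>
    \<comment> \<open>gains are K-infinity functions\<close>
    (\<forall>i. \<forall>j\<in>II i. Kinf (\<gamma> i j)) \<and>
    \<comment> \<open>pointwise equicontinuity of the family of gains\<close>
    (\<forall>r\<ge>0. \<forall>\<epsilon>>0. \<exists>\<delta>>0. \<forall>i. \<forall>j\<in>II i. \<forall>r'\<ge>0. \<bar>r' - r\<bar> < \<delta> \<longrightarrow> \<bar>\<gamma> i j r' - \<gamma> i j r\<bar> < \<epsilon>) \<and>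
    \<comment> \<open>(M1)\<close>
    (\<exists>\<xi>. Kinf \<xi> \<and> (\<forall>i. \<mu> i (\<lambda>_. 0) = 0 \<and> (\<forall>s\<in>lpos. ennreal (\<xi> (linf_norm s)) \<le> \<mu> i s))) \<and>
    \<comment> \<open>(M2)\<close>
    (\<forall>i. \<forall>s\<in>lpos. \<forall>t\<in>lpos. s \<le> t \<longrightarrow> \<mu> i s \<le> \<mu> i t) \<and>
    \<comment> \<open>(M3)\<close>
    (\<forall>i. \<forall>J. finite J \<longrightarrow>
       (let V = {s\<in>lpos. \<forall>j. j \<notin> J \<longrightarrow> s j = 0} in
         (\<forall>s\<in>V. \<mu> i s < \<infinity>) \<and>
         (\<forall>s\<in>V. \<forall>\<epsilon>>0. \<exists>\<delta>>0. \<forall>t\<in>V. linf_norm (t - s) < \<delta> \<longrightarrow>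
              \<bar>enn2real (\<mu> i t) - enn2real (\<mu> i s)\<bar> < \<epsilon>))) \<and>
    \<comment> \<open>(M4)\<close>
    (\<forall>A. A \<subseteq> lpos \<and> (\<exists>C. \<forall>s\<in>A. linf_norm s \<le> C) \<longrightarrow>
       (\<forall>\<epsilon>>0. \<exists>\<delta>>0. \<forall>s0\<in>A. \<forall>s\<in>lpos. linf_norm (s - s0) \<le> \<delta> \<longrightarrow>
          (SUP i. \<bar>enn2real (\<mu> i (restr s (II i))) - enn2real (\<mu> i (restr s0 (II i)))\<bar>) \<le> \<epsilon>))"

definition Psi :: "(('i \<Rightarrow> real) \<Rightarrow> ('i \<Rightarrow> real)) \<Rightarrow> ('i \<Rightarrow> real) set" where
  "Psi T = {s\<in>lpos. T s \<le> s}"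

definition cofinal :: "('i \<Rightarrow> real) set \<Rightarrow> bool" where
  "cofinal A \<longleftrightarrow> (\<forall>s\<in>lpos. \<exists>s'\<in>A. s \<le> s')"

definition trajectories_bounded :: "(('i \<Rightarrow> real) \<Rightarrow> ('i \<Rightarrow> real)) \<Rightarrow> bool" where
  "trajectories_bounded T \<longleftrightarrow> (\<forall>s\<in>lpos. \<exists>C. \<forall>n i. \<bar>(T ^^ n) s i\<bar> \<le> C)"

end

theory Submission
  imports Defs
begin

definition garg :: "('i \<Rightarrow> 'i set) \<Rightarrow> ('i \<Rightarrow> 'i \<Rightarrow> real \<Rightarrow> real) \<Rightarrow> 'i \<Rightarrow> ('i \<Rightarrow> real) \<Rightarrow> ('i \<Rightarrow> real)" where
  "garg II \<gamma> i s = (\<lambda>j. if j \<in> II i then \<gamma> i j (s j) else 0)"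

lemma Gam_garg: "Gam II \<gamma> \<mu> s i = enn2real (\<mu> i (garg II \<gamma> i s))"
  by (simp add: Gam_def garg_def)

lemma Kinf_mono: "Kinf g \<Longrightarrow> 0 \<le> r \<Longrightarrow> r \<le> r' \<Longrightarrow> g r \<le> g r'"
proof -
  assume K: "Kinf g" and r: "0 \<le> r" and rr: "r \<le> r'"
  show "g r \<le> g r'"
  proof (cases "r = r'")
    case False
    then have "r < r'" using rr by simp
    moreover have "strict_mono_on {0..} g" using K unfolding Kinf_def by blast
    ultimately have "g r < g r'" using r unfolding strict_mono_on_def by auto
    then show ?thesis by simp
  qed simp
qed

lemma Kinf_nonneg: "Kinf g \<Longrightarrow> 0 \<le> r \<Longrightarrow> 0 \<le> g r"
proof -
  assume K: "Kinf g" and r: "0 \<le> r"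
  have "g 0 \<le> g r" using Kinf_mono[OF K _ r] by simp
  moreover have "g 0 = 0" using K unfolding Kinf_def by blast
  ultimately show ?thesis by simp
qed

lemma go_fin: "gain_operator II \<gamma> \<mu> \<Longrightarrow> finite (II i)"
  unfolding gain_operator_def by (drule conjunct1) blast

lemma go_K: "gain_operator II \<gamma> \<mu> \<Longrightarrow> j \<in> II i \<Longrightarrow> Kinf (\<gamma> i j)"
  unfolding gain_operator_def by (drule conjunct2, drule conjunct1) blast

lemma go_M2: "gain_operator II \<gamma> \<mu> \<Longrightarrow> s \<in> lpos \<Longrightarrow> t \<in> lpos \<Longrightarrow> s \<le> t \<Longrightarrow> \<mu> i s \<le> \<mu> i t"
  unfolding gain_operator_def by (drule conjunct2, drule conjunct2, drule conjunct2, drule conjunct2, drule conjunct1) blast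

lemma go_M3:
  assumes "gain_operator II \<gamma> \<mu>" "finite J" "s \<in> lpos" "\<forall>j. j \<notin> J \<longrightarrow> s j = 0"
  shows "\<mu> i s < \<infinity> \<and> (\<forall>\<epsilon>>0. \<exists>\<delta>>0. \<forall>t\<in>lpos. (\<forall>j. j \<notin> J \<longrightarrow> t j = 0) \<longrightarrow> linf_norm (t - s) < \<delta> \<longrightarrow>
              \<bar>enn2real (\<mu> i t) - enn2real (\<mu> i s)\<bar> < \<epsilon>)"
proof -
  have "let V = {s\<in>lpos. \<forall>j. j \<notin> J \<longrightarrow> s j = 0} in
         (\<forall>s\<in>V. \<mu> i s < \<infinity>) \<and>
         (\<forall>s\<in>V. \<forall>\<epsilon>>0. \<exists>\<delta>>0. \<forall>t\<in>V. linf_norm (t - s) < \<delta> \<longrightarrow>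
              \<bar>enn2real (\<mu> i t) - enn2real (\<mu> i s)\<bar> < \<epsilon>)"
    using conjunct1[OF conjunct2[OF conjunct2[OF conjunct2[OF conjunct2[OF conjunct2[OF assms(1)[unfolded gain_operator_def]]]]]]] assms(2)
    by blast
  then show ?thesis using assms(3,4) unfolding Let_def by blast
qed

lemma garg_lpos:
  assumes "gain_operator II \<gamma> \<mu>" "\<forall>j. 0 \<le> s j"
  shows "garg II \<gamma> i s \<in> lpos"
proof -
  have fin: "finite (II i)" using go_fin[OF assms(1)] .
  have nn: "\<forall>j. 0 \<le> garg II \<gamma> i s j"
  proof
    fix j show "0 \<le> garg II \<gamma> i s j"
    proof (cases "j \<in> II i")
      case True
      then show ?thesis using Kinf_nonneg[OF go_K[OF assms(1) True]] assms(2) unfolding garg_def by simp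
    qed (simp add: garg_def)
  qed
  have "range (\<lambda>j. \<bar>garg II \<gamma> i s j\<bar>) \<subseteq> insert 0 ((\<lambda>j. \<bar>\<gamma> i j (s j)\<bar>) ` II i)"
    unfolding garg_def by auto
  moreover have "finite (insert 0 ((\<lambda>j. \<bar>\<gamma> i j (s j)\<bar>) ` II i))" using fin by simp
  ultimately have "bdd_above (range (\<lambda>j. \<bar>garg II \<gamma> i s j\<bar>))"
    by (meson bdd_above_finite bdd_above_mono)
  then show ?thesis using nn unfolding lpos_def by auto
qed

lemma garg_supp: "\<forall>j. j \<notin> II i \<longrightarrow> garg II \<gamma> i s j = 0"
  unfolding garg_def by auto

lemma Gam_mono:
  assumes "gain_operator II \<gamma> \<mu>" "\<forall>j. 0 \<le> s j" "s \<le> t"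
  shows "Gam II \<gamma> \<mu> s \<le> Gam II \<gamma> \<mu> t"
proof (rule le_funI)
  fix i
  have t0: "\<forall>j. 0 \<le> t j" using assms(2,3) by (meson le_funD order_trans)
  have l1: "garg II \<gamma> i s \<in> lpos" "garg II \<gamma> i t \<in> lpos"
    using garg_lpos[OF assms(1) assms(2)] garg_lpos[OF assms(1) t0] by auto
  have le: "garg II \<gamma> i s \<le> garg II \<gamma> i t"
  proof (rule le_funI)
    fix j show "garg II \<gamma> i s j \<le> garg II \<gamma> i t j"
    proof (cases "j \<in> II i")
      case True
      have "\<gamma> i j (s j) \<le> \<gamma> i j (t j)"
        using Kinf_mono[OF go_K[OF assms(1) True]] assms(2) le_funD[OF assms(3)] by blast
      then show ?thesis using True unfolding garg_def by simp
    qed (simp add: garg_def)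
  qed
  have "\<mu> i (garg II \<gamma> i s) \<le> \<mu> i (garg II \<gamma> i t)" using go_M2[OF assms(1) l1 le] .
  moreover have "\<mu> i (garg II \<gamma> i t) < \<infinity>"
    using go_M3[OF assms(1) go_fin[OF assms(1)] l1(2) garg_supp] by blast
  ultimately show "Gam II \<gamma> \<mu> s i \<le> Gam II \<gamma> \<mu> t i"
    unfolding Gam_garg by (simp add: enn2real_mono)
qed

lemma Gam_nonneg: "0 \<le> Gam II \<gamma> \<mu> s i"
  unfolding Gam_def by simp

lemma lpos_bound: "s \<in> lpos \<Longrightarrow> \<exists>C. \<forall>i. \<bar>s i\<bar> \<le> C"
proof -
  assume "s \<in> lpos"
  then obtain M where "\<forall>x\<in>range (\<lambda>i. \<bar>s i\<bar>). x \<le> M" unfolding lpos_def bdd_above_def by blast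
  then show ?thesis by blast
qed

lemma limit_lemma:
  assumes go: "gain_operator II \<gamma> \<mu>"
    and x0: "x 0 = s" and s: "s \<in> lpos"
    and inc: "\<And>n. x n \<le> x (Suc n)"
    and C: "\<And>n i. \<bar>x n i\<bar> \<le> C"
    and G: "\<And>n. Gam II \<gamma> \<mu> (x n) \<le> x (Suc n)"
  shows "\<exists>s'\<in>Psi (Gam II \<gamma> \<mu>). s \<le> s'"
proof -
  define sh where "sh = (\<lambda>i. SUP n. x n i)"
  have bdd: "bdd_above (range (\<lambda>n. x n i))" for i
    using C by (meson abs_le_D1 bdd_aboveI2)
  have up: "x n i \<le> sh i" for n i
    unfolding sh_def by (rule cSUP_upper[OF _ bdd]) auto
  have s0: "\<forall>i. 0 \<le> s i" using s unfolding lpos_def by auto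
  have ssh: "s \<le> sh" using up[of 0] x0 by (auto simp: le_fun_def)
  have sh0: "\<forall>i. 0 \<le> sh i" using ssh s0 by (meson le_funD order_trans)
  have shC: "sh i \<le> C" for i
    unfolding sh_def by (rule cSUP_least) (use C abs_le_D1 in auto)
  have shl: "sh \<in> lpos"
    unfolding lpos_def using sh0 shC by (auto intro!: bdd_aboveI2[where M=C])
  have xn0: "0 \<le> x n j" for n j
  proof -
    have "incseq (\<lambda>n. x n)" using inc by (rule incseq_SucI)
    then have "x 0 \<le> x n" by (simp add: incseq_def)
    then show ?thesis using s0 x0 by (metis le_funD order_trans)
  qed
  have conv: "(\<lambda>n. x n j) \<longlonglongrightarrow> sh j" for j
  proof -
    have "incseq (\<lambda>n. x n j)" using inc by (intro incseq_SucI) (simp add: le_fun_def)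
    then show ?thesis unfolding sh_def using LIMSEQ_incseq_SUP[OF bdd] by blast
  qed
  have "Gam II \<gamma> \<mu> sh i \<le> sh i" for i
  proof (rule field_le_epsilon)
    fix e :: real assume e: "0 < e"
    let ?v = "garg II \<gamma> i sh"
    have vl: "?v \<in> lpos" using garg_lpos[OF go sh0] .
    from go_M3[OF go go_fin[OF go] vl garg_supp] e obtain d where d: "d > 0"
      and dd: "\<And>t. t \<in> lpos \<Longrightarrow> (\<forall>j. j \<notin> II i \<longrightarrow> t j = 0) \<Longrightarrow> linf_norm (t - ?v) < d \<Longrightarrow>
              \<bar>enn2real (\<mu> i t) - enn2real (\<mu> i ?v)\<bar> < e"
      by blast
    have ev: "\<forall>\<^sub>F n in sequentially. \<forall>j\<in>II i. dist (\<gamma> i j (x n j)) (\<gamma> i j (sh j)) < d/2"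
    proof (rule eventually_ball_finite[OF go_fin[OF go]], rule ballI)
      fix j assume j: "j \<in> II i"
      have "continuous_on {0..} (\<gamma> i j)" using go_K[OF go j] unfolding Kinf_def by blast
      then have "(\<lambda>n. \<gamma> i j (x n j)) \<longlonglongrightarrow> \<gamma> i j (sh j)"
        by (rule continuous_on_tendsto_compose[OF _ conv]) (use sh0 xn0 in auto)
      then show "\<forall>\<^sub>F n in sequentially. dist (\<gamma> i j (x n j)) (\<gamma> i j (sh j)) < d/2"
      proof -
        have "0 < d/2" using d by simp
        then show ?thesis using \<open>(\<lambda>n. \<gamma> i j (x n j)) \<longlonglongrightarrow> \<gamma> i j (sh j)\<close> unfolding tendsto_iff by blast
      qed
    qed
    then obtain n where n: "\<forall>j\<in>II i. dist (\<gamma> i j (x n j)) (\<gamma> i j (sh j)) < d/2"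
      by (auto simp: eventually_sequentially)
    let ?w = "garg II \<gamma> i (x n)"
    have wl: "?w \<in> lpos" using garg_lpos[OF go, of "x n"] xn0 by blast
    have "linf_norm (?w - ?v) \<le> d/2"
      unfolding linf_norm_def
    proof (rule cSUP_least)
      fix j
      show "\<bar>(?w - ?v) j\<bar> \<le> d/2"
        using n d by (cases "j \<in> II i") (auto simp: garg_def dist_real_def)
    qed auto
    then have "linf_norm (?w - ?v) < d" using d by linarith
    then have "\<bar>enn2real (\<mu> i ?w) - enn2real (\<mu> i ?v)\<bar> < e"
      using dd[OF wl garg_supp] by blast
    moreover have "enn2real (\<mu> i ?w) \<le> sh i"
      using G[of n] up[of "Suc n" i] unfolding Gam_garg[symmetric] by (metis le_funD order_trans)
    ultimately show "Gam II \<gamma> \<mu> sh i \<le> sh i + e" unfolding Gam_garg by linarith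
  qed
  then have "sh \<in> Psi (Gam II \<gamma> \<mu>)" using shl unfolding Psi_def by (auto simp: le_fun_def)
  then show ?thesis using ssh by blast
qed

lemma omax_lpos: "b \<in> lpos \<Longrightarrow> s \<in> lpos \<Longrightarrow> omax b s \<in> lpos"
proof -
  assume b: "b \<in> lpos" and s: "s \<in> lpos"
  obtain C1 where C1: "\<forall>i. \<bar>b i\<bar> \<le> C1" using lpos_bound[OF b] by blast
  obtain C2 where C2: "\<forall>i. \<bar>s i\<bar> \<le> C2" using lpos_bound[OF s] by blast
  have "\<forall>i. \<bar>omax b s i\<bar> \<le> max C1 C2" using C1 C2 unfolding omax_def
    by (metis abs_le_D1 abs_of_nonneg max.mono max_def order_trans abs_ge_zero)
  then show ?thesis using b s unfolding lpos_def omax_def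
    by (auto intro!: bdd_aboveI2[where M="max C1 C2"] simp: le_max_iff_disj)
qed

lemma bounded_by: "sh \<in> lpos \<Longrightarrow> (\<And>n i. 0 \<le> x n i) \<Longrightarrow> (\<And>n. x n \<le> sh) \<Longrightarrow> \<exists>C. \<forall>n i. \<bar>x n i\<bar> \<le> C"
proof -
  assume sh: "sh \<in> lpos" and x0: "\<And>n i. 0 \<le> x n i" and xs: "\<And>n. x n \<le> sh"
  obtain C where C: "\<forall>i. \<bar>sh i\<bar> \<le> C" using lpos_bound[OF sh] by blast
  have "\<bar>x n i\<bar> \<le> C" for n i using x0[of n i] xs[of n] C
    by (metis abs_of_nonneg abs_le_D1 le_funD order_trans)
  then show ?thesis by blast
qed

theorem proposition2p23:
  fixes II :: "'i::countable \<Rightarrow> 'i set"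
    and \<gamma> :: "'i \<Rightarrow> 'i \<Rightarrow> real \<Rightarrow> real"
    and \<mu> :: "'i \<Rightarrow> ('i \<Rightarrow> real) \<Rightarrow> ennreal"
  assumes "gain_operator II \<gamma> \<mu>"
  defines "\<Gamma> \<equiv> Gam II \<gamma> \<mu>"
  shows "(cofinal (Psi \<Gamma>) \<longleftrightarrow> (\<forall>b\<in>lpos. trajectories_bounded (\<lambda>s. omax b (\<Gamma> s))))
       \<and> (cofinal (Psi \<Gamma>) \<longleftrightarrow> trajectories_bounded (\<lambda>s. omax s (\<Gamma> s)))
       \<and> (cofinal (Psi \<Gamma>) \<longleftrightarrow>
            (\<forall>s\<in>lpos. \<exists>s'\<in>lpos. \<exists>n\<ge>1. (\<forall>l<n. s \<le> (\<Gamma> ^^ l) s') \<and> (\<Gamma> ^^ n) s' \<le> s'))"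
proof -
  note go = assms(1)
  have mono: "\<And>s t. \<forall>j. 0 \<le> s j \<Longrightarrow> s \<le> t \<Longrightarrow> \<Gamma> s \<le> \<Gamma> t"
    unfolding \<Gamma>_def using Gam_mono[OF go] by blast
  have nn: "\<And>s i. 0 \<le> \<Gamma> s i" unfolding \<Gamma>_def by (rule Gam_nonneg)
  have lim: "\<And>x s C. x 0 = s \<Longrightarrow> s \<in> lpos \<Longrightarrow> (\<And>n. x n \<le> x (Suc n)) \<Longrightarrow> (\<And>n i. \<bar>x n i\<bar> \<le> C)
      \<Longrightarrow> (\<And>n. \<Gamma> (x n) \<le> x (Suc n)) \<Longrightarrow> \<exists>s'\<in>Psi \<Gamma>. s \<le> s'"
    unfolding \<Gamma>_def using limit_lemma[OF go] by blast
  have lpos0: "\<And>s i. s \<in> lpos \<Longrightarrow> 0 \<le> s i" unfolding lpos_def by blast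
  have AB: "\<forall>b\<in>lpos. trajectories_bounded (\<lambda>s. omax b (\<Gamma> s))" if A: "cofinal (Psi \<Gamma>)"
  proof (intro ballI, unfold trajectories_bounded_def, intro ballI)
    fix b s :: "'i \<Rightarrow> real" assume b: "b \<in> lpos" and s: "s \<in> lpos"
    obtain sh where sh: "sh \<in> Psi \<Gamma>" "omax b s \<le> sh"
      using A omax_lpos[OF b s] unfolding cofinal_def by blast
    have shl: "sh \<in> lpos" and shG: "\<Gamma> sh \<le> sh" using sh(1) unfolding Psi_def by auto
    define x where "x n = ((\<lambda>s. omax b (\<Gamma> s)) ^^ n) s" for n
    have P: "(\<forall>i. 0 \<le> x n i) \<and> x n \<le> sh" for n
    proof (induction n)
      case 0
      then show ?case using sh(2) lpos0[OF s] unfolding x_def omax_def by (auto simp: le_fun_def)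
    next
      case (Suc n)
      have "\<Gamma> (x n) \<le> \<Gamma> sh" using mono Suc by blast
      then have "\<Gamma> (x n) \<le> sh" using shG by order
      moreover have "b \<le> sh" using sh(2) unfolding omax_def by (auto simp: le_fun_def)
      moreover have "x (Suc n) = omax b (\<Gamma> (x n))" unfolding x_def by simp
      ultimately show ?case using lpos0[OF b] unfolding omax_def by (auto simp: le_fun_def le_max_iff_disj)
    qed
    show "\<exists>C. \<forall>n i. \<bar>((\<lambda>s. omax b (\<Gamma> s)) ^^ n) s i\<bar> \<le> C"
      using bounded_by[OF shl, of x] P unfolding x_def by blast
  qed
  have AC: "trajectories_bounded (\<lambda>s. omax s (\<Gamma> s))" if A: "cofinal (Psi \<Gamma>)"
  proof (unfold trajectories_bounded_def, intro ballI)
    fix s :: "'i \<Rightarrow> real" assume s: "s \<in> lpos"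
    obtain sh where sh: "sh \<in> Psi \<Gamma>" "s \<le> sh"
      using A s unfolding cofinal_def by blast
    have shl: "sh \<in> lpos" and shG: "\<Gamma> sh \<le> sh" using sh(1) unfolding Psi_def by auto
    define x where "x n = ((\<lambda>s. omax s (\<Gamma> s)) ^^ n) s" for n
    have P: "(\<forall>i. 0 \<le> x n i) \<and> x n \<le> sh" for n
    proof (induction n)
      case 0
      then show ?case using sh(2) lpos0[OF s] unfolding x_def by auto
    next
      case (Suc n)
      have "\<Gamma> (x n) \<le> \<Gamma> sh" using mono Suc by blast
      then have "\<Gamma> (x n) \<le> sh" using shG by order
      moreover have "x (Suc n) = omax (x n) (\<Gamma> (x n))" unfolding x_def by simp
      ultimately show ?case using Suc unfolding omax_def by (auto simp: le_fun_def le_max_iff_disj)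
    qed
    show "\<exists>C. \<forall>n i. \<bar>((\<lambda>s. omax s (\<Gamma> s)) ^^ n) s i\<bar> \<le> C"
      using bounded_by[OF shl, of x] P unfolding x_def by blast
  qed
  have BA: "cofinal (Psi \<Gamma>)" if B: "\<forall>b\<in>lpos. trajectories_bounded (\<lambda>s. omax b (\<Gamma> s))"
    unfolding cofinal_def
  proof
    fix s :: "'i \<Rightarrow> real" assume s: "s \<in> lpos"
    define x where "x n = ((\<lambda>t. omax s (\<Gamma> t)) ^^ n) s" for n
    obtain C where C: "\<And>n i. \<bar>x n i\<bar> \<le> C"
      using B s unfolding trajectories_bounded_def x_def by blast
    have xs: "x (Suc n) = omax s (\<Gamma> (x n))" for n unfolding x_def by simp
    have P: "(\<forall>i. 0 \<le> x n i) \<and> x n \<le> x (Suc n)" for n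
    proof (induction n)
      case 0
      then show ?case using lpos0[OF s] xs[of 0] unfolding x_def omax_def by (auto simp: le_fun_def)
    next
      case (Suc n)
      have m: "\<Gamma> (x n) \<le> \<Gamma> (x (Suc n))" using mono Suc by blast
      have e1: "x (Suc n) i = max (s i) (\<Gamma> (x n) i)" for i using xs[of n] unfolding omax_def by simp
      have e2: "x (Suc (Suc n)) i = max (s i) (\<Gamma> (x (Suc n)) i)" for i using xs[of "Suc n"] unfolding omax_def by simp
      have "x (Suc n) \<le> x (Suc (Suc n))"
      proof (rule le_funI)
        fix i show "x (Suc n) i \<le> x (Suc (Suc n)) i"
          using le_funD[OF m, of i] e1[of i] e2[of i] by (metis max.mono order_refl)
      qed
      moreover have "\<forall>i. 0 \<le> x (Suc n) i" using e1 lpos0[OF s] by (simp add: le_max_iff_disj)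
      ultimately show ?case by blast
    qed
    have G: "\<Gamma> (x n) \<le> x (Suc n)" for n using xs[of n] unfolding omax_def by (auto simp: le_fun_def)
    show "\<exists>s'\<in>Psi \<Gamma>. s \<le> s'"
      by (rule lim[of x s C]) (use s C G P in \<open>auto simp: x_def\<close>)
  qed
  have CA: "cofinal (Psi \<Gamma>)" if Cb: "trajectories_bounded (\<lambda>s. omax s (\<Gamma> s))"
    unfolding cofinal_def
  proof
    fix s :: "'i \<Rightarrow> real" assume s: "s \<in> lpos"
    define x where "x n = ((\<lambda>t. omax t (\<Gamma> t)) ^^ n) s" for n
    obtain C where C: "\<And>n i. \<bar>x n i\<bar> \<le> C"
      using Cb s unfolding trajectories_bounded_def x_def by blast
    have xs: "x (Suc n) = omax (x n) (\<Gamma> (x n))" for n unfolding x_def by simp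
    have P: "x n \<le> x (Suc n)" for n using xs[of n] unfolding omax_def by (auto simp: le_fun_def)
    have G: "\<Gamma> (x n) \<le> x (Suc n)" for n using xs[of n] unfolding omax_def by (auto simp: le_fun_def)
    show "\<exists>s'\<in>Psi \<Gamma>. s \<le> s'"
      by (rule lim[of x s C]) (use s C G P in \<open>auto simp: x_def\<close>)
  qed
  have AD: "\<forall>s\<in>lpos. \<exists>s'\<in>lpos. \<exists>n\<ge>1. (\<forall>l<n. s \<le> (\<Gamma> ^^ l) s') \<and> (\<Gamma> ^^ n) s' \<le> s'"
    if A: "cofinal (Psi \<Gamma>)"
  proof
    fix s :: "'i \<Rightarrow> real" assume s: "s \<in> lpos"
    obtain sh where sh: "sh \<in> Psi \<Gamma>" "s \<le> sh"
      using A s unfolding cofinal_def by blast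
    have shl: "sh \<in> lpos" and shG: "\<Gamma> sh \<le> sh" using sh(1) unfolding Psi_def by auto
    show "\<exists>s'\<in>lpos. \<exists>n\<ge>1. (\<forall>l<n. s \<le> (\<Gamma> ^^ l) s') \<and> (\<Gamma> ^^ n) s' \<le> s'"
      by (rule bexI[OF _ shl], rule exI[of _ 1]) (use sh shG in auto)
  qed
  have DC: "trajectories_bounded (\<lambda>s. omax s (\<Gamma> s))"
    if D: "\<forall>s\<in>lpos. \<exists>s'\<in>lpos. \<exists>n\<ge>1. (\<forall>l<n. s \<le> (\<Gamma> ^^ l) s') \<and> (\<Gamma> ^^ n) s' \<le> s'"
  proof (unfold trajectories_bounded_def, intro ballI)
    fix s :: "'i \<Rightarrow> real" assume s: "s \<in> lpos"
    obtain sh n where shl: "sh \<in> lpos" and n: "n \<ge> 1" and L: "\<forall>l<n. s \<le> (\<Gamma> ^^ l) sh"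
      and N: "(\<Gamma> ^^ n) sh \<le> sh"
      using D s by blast
    define x where "x k = ((\<lambda>t. omax t (\<Gamma> t)) ^^ k) s" for k
    have xs: "x (Suc k) = omax (x k) (\<Gamma> (x k))" for k unfolding x_def by simp
    have P: "(\<forall>i. 0 \<le> x k i) \<and> (\<forall>l<n. x k \<le> (\<Gamma> ^^ l) sh)" for k
    proof (induction k)
      case 0
      then show ?case using L lpos0[OF s] unfolding x_def by auto
    next
      case (Suc k)
      have "\<Gamma> (x k) \<le> (\<Gamma> ^^ l) sh" if l: "l < n" for l
      proof (cases l)
        case 0
        have "\<Gamma> (x k) \<le> \<Gamma> ((\<Gamma> ^^ (n - 1)) sh)" using mono Suc n by simp
        also have "\<dots> = (\<Gamma> ^^ n) sh" using n
          by (metis Suc_diff_1 comp_apply funpow.simps(2) less_le_trans zero_less_one)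
        finally show ?thesis using N 0 by simp
      next
        case (Suc m)
        have "\<Gamma> (x k) \<le> \<Gamma> ((\<Gamma> ^^ m) sh)" using mono Suc.IH l Suc by simp
        then show ?thesis using Suc by simp
      qed
      then show ?case using Suc xs[of k] unfolding omax_def
        by (auto simp: le_fun_def le_max_iff_disj)
    qed
    have n0: "0 < n" using n by simp
    have xsh: "x k \<le> sh" for k
    proof -
      have "x k \<le> (\<Gamma> ^^ 0) sh" using P[of k] n0 by blast
      then show ?thesis by simp
    qed
    have "\<exists>C. \<forall>k i. \<bar>x k i\<bar> \<le> C"
      by (rule bounded_by[OF shl]) (use P xsh in auto)
    then show "\<exists>C. \<forall>k i. \<bar>((\<lambda>s. omax s (\<Gamma> s)) ^^ k) s i\<bar> \<le> C"
      unfolding x_def by blast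
  qed
  show ?thesis using AB AC BA CA AD DC by blast
qed

end
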